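(* Let $K\ge2$, $\eta>0$, and let $\mathbf r\in\mathbb R^K$ be a mean reward vector with no ties, i.e. $r(a)\ne r(a')$ whenever $a\ne a'$; let $a^*=\arg\max_a r(a)$. For $\boldsymbol\theta\in\mathbb R^K$ let $\pi_{\boldsymbol\theta}$ be the softmax policy $\pi_{\boldsymbol\theta}(a)=e^{\theta(a)}/\sum_b e^{\theta(b)}$ and $\Phi_\eta(\boldsymbol\theta)=\pi_{\boldsymbol\theta}^\top\mathbf r+\frac1\eta\sum_a\log\pi_{\boldsymbol\theta}(a)$. Then for all $\boldsymbol\theta\in\mathbb R^K$, $$\|\nabla_{\boldsymbol\theta}\Phi_\eta(\boldsymbol\theta)\|_2\ge\Big(\pi_{\boldsymbol\theta}(a^* )\big(r(a^* )-\pi_{\boldsymbol\theta}^\top\mathbf r\big)-\frac K\eta\Big)^+ ,$$ where $(x)^+=\max\{0,x\}$.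
   Context: Setting: $K$-armed bandit with mean rewards $\mathbf r$; $\Phi_\eta$ is the log-barrier regularized objective. *)

theory Defs
  imports "HOL-Analysis.Analysis"
begin

definition softmax :: "real^'n \<Rightarrow> 'n \<Rightarrow> real" where
  "softmax \<theta> a = exp (\<theta> $ a) / (\<Sum>b\<in>UNIV. exp (\<theta> $ b))"

definition exp_reward :: "real^'n \<Rightarrow> real^'n \<Rightarrow> real" where
  "exp_reward r \<theta> = (\<Sum>a\<in>UNIV. softmax \<theta> a * r $ a)"

definition Phi :: "real \<Rightarrow> real^'n \<Rightarrow> real^'n \<Rightarrow> real" where
  "Phi \<eta> r \<theta> = exp_reward r \<theta> + (1 / \<eta>) * (\<Sum>a\<in>UNIV. ln (softmax \<theta> a))"

end

theory Submission
  imports Defs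
begin

theorem lemma4p2:
  fixes r :: "real^'n" and \<eta> :: real and astar :: 'n
  assumes "CARD('n) \<ge> 2"
    and "\<eta> > 0"
    and "\<And>a a'. a \<noteq> a' \<Longrightarrow> r $ a \<noteq> r $ a'"
    and "\<And>a. r $ a \<le> r $ astar"
  shows "\<forall>\<theta>::real^'n. \<exists>D. (GDERIV (Phi \<eta> r) \<theta> :> D) \<and>
           norm D \<ge> max 0 (softmax \<theta> astar * (r $ astar - exp_reward r \<theta>)
                            - real CARD('n) / \<eta>)"
proof
  fix \<theta> :: "real^'n"
  define S where "S t = (\<Sum>b\<in>UNIV. exp (t $ b))" for t :: "real^'n"
  define N where "N t = (\<Sum>a\<in>UNIV. exp (t $ a) * r $ a)" for t :: "real^'n"
  define K where "K = real CARD('n)"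
  have Spos: "S t > 0" for t unfolding S_def
    by (rule sum_pos) auto
  have sm: "softmax t a = exp (t $ a) / S t" for t a by (simp add: softmax_def S_def)
  have ER: "exp_reward r t = N t / S t" for t
    by (simp add: exp_reward_def N_def sm sum_divide_distrib)
  have lnsm: "ln (softmax t a) = t $ a - ln (S t)" for t a
    using Spos[of t] by (simp add: sm ln_div)
  have PhiEq: "Phi \<eta> r = (\<lambda>t. N t / S t + (1/\<eta>) * ((\<Sum>a\<in>UNIV. t $ a) - K * ln (S t)))"
    by (rule ext) (simp add: Phi_def ER lnsm sum_subtractf K_def)
  have dcomp: "((\<lambda>t::real^'n. t $ a) has_derivative (\<lambda>h. h $ a)) (at \<theta>)" for a
    by (rule bounded_linear.has_derivative[OF bounded_linear_vec_nth]) simp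
  have dS: "(S has_derivative (\<lambda>h. \<Sum>b\<in>UNIV. h $ b * exp (\<theta> $ b))) (at \<theta>)"
    unfolding S_def by (intro has_derivative_sum has_derivative_exp dcomp)
  have dN: "(N has_derivative (\<lambda>h. \<Sum>a\<in>UNIV. h $ a * exp (\<theta> $ a) * r $ a)) (at \<theta>)"
    unfolding N_def by (intro has_derivative_sum has_derivative_mult_left has_derivative_exp dcomp)
  have dsum: "((\<lambda>t::real^'n. \<Sum>a\<in>UNIV. t $ a) has_derivative (\<lambda>h. \<Sum>a\<in>UNIV. h $ a)) (at \<theta>)"
    by (intro has_derivative_sum dcomp)
  have dlnS: "((\<lambda>t. ln (S t)) has_derivative (\<lambda>h. (\<Sum>b\<in>UNIV. h $ b * exp (\<theta> $ b)) * inverse (S \<theta>))) (at \<theta>)"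
    by (rule has_derivative_ln[OF _ dS]) (use Spos in auto)
  define p where "p a = exp (\<theta> $ a) / S \<theta>" for a
  define E where "E = N \<theta> / S \<theta>"
  define D where "D = (\<chi> i. p i * (r $ i - E) + (1/\<eta>) * (1 - K * p i))"
  have "(Phi \<eta> r has_derivative (\<lambda>h. ((\<Sum>a\<in>UNIV. h $ a * exp (\<theta> $ a) * r $ a) * S \<theta> - N \<theta> * (\<Sum>b\<in>UNIV. h $ b * exp (\<theta> $ b))) / (S \<theta> * S \<theta>)
      + (1/\<eta>) * ((\<Sum>a\<in>UNIV. h $ a) - K * ((\<Sum>b\<in>UNIV. h $ b * exp (\<theta> $ b)) * inverse (S \<theta>))))) (at \<theta>)"
    unfolding PhiEq
    by (intro has_derivative_add has_derivative_mult_right has_derivative_diff has_derivative_divide' dN dS dsum dlnS)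
       (use Spos[of \<theta>] in auto)
  moreover have "(\<lambda>h. ((\<Sum>a\<in>UNIV. h $ a * exp (\<theta> $ a) * r $ a) * S \<theta> - N \<theta> * (\<Sum>b\<in>UNIV. h $ b * exp (\<theta> $ b))) / (S \<theta> * S \<theta>)
      + (1/\<eta>) * ((\<Sum>a\<in>UNIV. h $ a) - K * ((\<Sum>b\<in>UNIV. h $ b * exp (\<theta> $ b)) * inverse (S \<theta>)))) = (\<lambda>h. D \<bullet> h)"
  proof
    fix h :: "real^'n"
    have S0: "S \<theta> \<noteq> 0" using Spos[of \<theta>] by simp
    have "D \<bullet> h = (\<Sum>i\<in>UNIV. (p i * (r $ i - E) + (1/\<eta>) * (1 - K * p i)) * h $ i)"
      by (simp add: inner_vec_def D_def)
    also have "\<dots> = (\<Sum>i\<in>UNIV. h $ i * p i * r $ i) - E * (\<Sum>i\<in>UNIV. h $ i * p i)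
        + (1/\<eta>) * ((\<Sum>i\<in>UNIV. h $ i) - K * (\<Sum>i\<in>UNIV. h $ i * p i))"
      by (simp add: algebra_simps sum.distrib sum_subtractf sum_distrib_left)
    also have "\<dots> = ((\<Sum>a\<in>UNIV. h $ a * exp (\<theta> $ a) * r $ a) * S \<theta> - N \<theta> * (\<Sum>b\<in>UNIV. h $ b * exp (\<theta> $ b))) / (S \<theta> * S \<theta>)
      + (1/\<eta>) * ((\<Sum>a\<in>UNIV. h $ a) - K * ((\<Sum>b\<in>UNIV. h $ b * exp (\<theta> $ b)) * inverse (S \<theta>)))"
      using S0 by (simp add: p_def E_def field_simps sum_divide_distrib[symmetric])
    finally show "((\<Sum>a\<in>UNIV. h $ a * exp (\<theta> $ a) * r $ a) * S \<theta> - N \<theta> * (\<Sum>b\<in>UNIV. h $ b * exp (\<theta> $ b))) / (S \<theta> * S \<theta>)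
      + (1/\<eta>) * ((\<Sum>a\<in>UNIV. h $ a) - K * ((\<Sum>b\<in>UNIV. h $ b * exp (\<theta> $ b)) * inverse (S \<theta>))) = D \<bullet> h" by simp
  qed
  ultimately have G: "GDERIV (Phi \<eta> r) \<theta> :> D" by (simp add: gderiv_def inner_commute)
  have p0: "p a \<ge> 0" "p a \<le> 1" for a
  proof -
    show "p a \<ge> 0" using Spos[of \<theta>] by (simp add: p_def)
    have "exp (\<theta> $ a) \<le> S \<theta>" unfolding S_def
      by (rule member_le_sum) auto
    then show "p a \<le> 1" using Spos[of \<theta>] by (simp add: p_def)
  qed
  have K0: "K \<ge> 0" by (simp add: K_def)
  have "(1/\<eta>) * (1 - K * p astar) \<ge> - K / \<eta>"
  proof -
    have "1 - K * p astar \<ge> - K" using p0[of astar] K0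
      by (smt (verit) mult_left_le)
    then show ?thesis using assms(2) by (simp add: divide_simps)
  qed
  moreover have "\<bar>D $ astar\<bar> \<le> norm D" by (rule component_le_norm_cart)
  moreover have "softmax \<theta> astar = p astar" "exp_reward r \<theta> = E"
    by (simp_all add: sm p_def ER E_def)
  ultimately have "norm D \<ge> max 0 (softmax \<theta> astar * (r $ astar - exp_reward r \<theta>) - real CARD('n) / \<eta>)"
    by (simp add: D_def K_def)
  with G show "\<exists>D. (GDERIV (Phi \<eta> r) \<theta> :> D) \<and> norm D \<ge> max 0 (softmax \<theta> astar * (r $ astar - exp_reward r \<theta>) - real CARD('n) / \<eta>)"
    by blast
qed

end
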